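(* Let $K$ be a real-valued kernel on $\mathbb R^d\times\mathbb R^d\setminus\{(x,x)\}$ satisfying $|K(x,y)|\le C_1|x-y|^{-d}$ for all $x\ne y$ and $\sum_{m\ge1}H_2(m)<\infty$. Fix $1\le q<\infty$ and $j\in\mathbb Z$. Then for every integer $n\ge1$, $$\sup_{y\in\mathbb R^d}\frac{1}{|B_{r_{n-j}}|}\int_{B_{r_{n-j}}}\int_{\mathbb R^d}|K_j(x,y+z)-K_j(x,y)|^q\,dx\,dz\lesssim2^{-jd(q-1)}\big(H_q^q(n)+H_q^q(n+1)+2^{-qn}\big),$$ where $r_k=2^{-k-1}\sqrt d$, and the implicit constant does not depend on $j$ or $n$.
   Context: $B_r$ is the ball of radius $r$ centered at $0$, $|B_r|$ its volume. For $1\le q<\infty$ and $m\ge1$, $H_q(m)=\sup_{y\in\mathbb R^d,R>0}\big(\frac{(2^mR)^{d(q-1)}}{|B_R|}\int_{|v|\le R}\int_{2^mR\le|x-y|\le2^{m+1}R}|K(x,y+v)-K(x,y)|^qdx\,dv\big)^{1/q}$. $\Phi$ is a smooth radial nonnegative function with $\operatorname{supp}\Phi\subset\{1/2\le|x|\le2\}$ and $\sum_{j\in\mathbb Z}\Phi_j(x)=1$ for $x\ne0$, where $\Phi_j(x)=\Phi(x/(2^j\sqrt d))$; $K_j(x,y)=K(x,y)\Phi_j(x-y)$. *)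

theory Defs
  imports "HOL-Analysis.Analysis"
begin

text \<open>C-infinity smoothness of a real function on a Euclidean space: all iterated
partial derivatives (along the basis directions) exist everywhere and are continuous.\<close>
coinductive smooth_fn :: "('a::euclidean_space \<Rightarrow> real) \<Rightarrow> bool" where
  "continuous_on UNIV f \<Longrightarrow>
   (\<forall>i\<in>Basis. \<exists>g. (\<forall>x. ((\<lambda>t. f (x + t *\<^sub>R i)) has_real_derivative g x) (at 0)) \<and> smooth_fn g)
   \<Longrightarrow> smooth_fn f"

definition Phi_j :: "('a::euclidean_space \<Rightarrow> real) \<Rightarrow> int \<Rightarrow> 'a \<Rightarrow> real" where
  "Phi_j \<Phi> j x = \<Phi> (x /\<^sub>R (2 powr real_of_int j * sqrt (real DIM('a))))"

definition admissible_Phi :: "('a::euclidean_space \<Rightarrow> real) \<Rightarrow> bool" where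
  "admissible_Phi \<Phi> \<longleftrightarrow>
     smooth_fn \<Phi> \<and>
     (\<forall>x y. norm x = norm y \<longrightarrow> \<Phi> x = \<Phi> y) \<and>
     (\<forall>x. 0 \<le> \<Phi> x) \<and>
     closure {x. \<Phi> x \<noteq> 0} \<subseteq> {x. 1/2 \<le> norm x \<and> norm x \<le> 2} \<and>
     (\<forall>x. x \<noteq> 0 \<longrightarrow> ((\<lambda>j. Phi_j \<Phi> j x) has_sum 1) (UNIV :: int set))"

definition K_j :: "('a::euclidean_space \<Rightarrow> 'a \<Rightarrow> real) \<Rightarrow> ('a \<Rightarrow> real) \<Rightarrow> int \<Rightarrow> 'a \<Rightarrow> 'a \<Rightarrow> real" where
  "K_j K \<Phi> j x y = K x y * Phi_j \<Phi> j (x - y)"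

text \<open>H_q(m)^q (the supremum inside the q-th root), as an extended nonnegative real.\<close>
definition Hq_pow :: "('a::euclidean_space \<Rightarrow> 'a \<Rightarrow> real) \<Rightarrow> real \<Rightarrow> nat \<Rightarrow> ennreal" where
  "Hq_pow K q m =
     (SUP yR \<in> (UNIV :: 'a set) \<times> {0<..}.
        (case yR of (y, R) \<Rightarrow>
          ennreal ((2 ^ m * R) powr (real DIM('a) * (q - 1)) / measure lborel (ball (0::'a) R)) *
          (\<integral>\<^sup>+ v. indicator (cball (0::'a) R) v *
             (\<integral>\<^sup>+ x. indicator {x. 2 ^ m * R \<le> norm (x - y) \<and> norm (x - y) \<le> 2 ^ (m + 1) * R} x *
                     ennreal (\<bar>K x (y + v) - K x y\<bar> powr q) \<partial>lborel) \<partial>lborel)))"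

definition Hq :: "('a::euclidean_space \<Rightarrow> 'a \<Rightarrow> real) \<Rightarrow> real \<Rightarrow> nat \<Rightarrow> ennreal" where
  "Hq K q m = (if Hq_pow K q m = top then top
               else ennreal (enn2real (Hq_pow K q m) powr (1 / q)))"

end

theory Submission
  imports Defs
begin

lemma smooth_partial:
  assumes "smooth_fn f" "i \<in> Basis"
  shows "\<exists>g. (\<forall>x. ((\<lambda>t. f (x + t *\<^sub>R i)) has_real_derivative g x) (at 0)) \<and> continuous_on UNIV g"
  using assms(1)
proof cases
  case 1
  then obtain g where g: "\<forall>x. ((\<lambda>t. f (x + t *\<^sub>R i)) has_real_derivative g x) (at 0)" "smooth_fn g"
    using assms(2) by blast
  from g(2) have "continuous_on UNIV g" by cases
  with g(1) show ?thesis by blast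
qed

lemma Phi_supp:
  assumes "admissible_Phi \<Phi>" "\<Phi> x \<noteq> 0"
  shows "1/2 \<le> norm x" "norm x \<le> 2"
  using assms closure_subset[of "{x. \<Phi> x \<noteq> 0}"] unfolding admissible_Phi_def by blast+

lemma Phi_coord_lip:
  assumes Phi: "admissible_Phi \<Phi>" and i: "i \<in> Basis"
  shows "\<exists>M\<ge>0. \<forall>x t. \<bar>\<Phi> (x + t *\<^sub>R i) - \<Phi> x\<bar> \<le> M * \<bar>t\<bar>"
proof -
  have sm: "smooth_fn \<Phi>" using Phi unfolding admissible_Phi_def by blast
  obtain g where g: "\<And>x. ((\<lambda>t. \<Phi> (x + t *\<^sub>R i)) has_real_derivative g x) (at 0)"
    and gc: "continuous_on UNIV g"
    using smooth_partial[OF sm i] by blast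
  have g0: "g x = 0" if x: "norm x > 2" for x
  proof -
    have ev: "eventually (\<lambda>t. \<Phi> (x + t *\<^sub>R i) = 0) (nhds (0::real))"
    proof -
      have "eventually (\<lambda>t. t \<in> ball (0::real) (norm x - 2)) (nhds 0)"
        using x by (intro eventually_nhds_in_open) auto
      then show ?thesis
      proof (rule eventually_mono)
        fix t :: real assume "t \<in> ball 0 (norm x - 2)"
        then have "\<bar>t\<bar> < norm x - 2" by simp
        moreover have "norm x \<le> norm (x + t *\<^sub>R i) + \<bar>t\<bar>"
          using norm_triangle_ineq4[of "x + t *\<^sub>R i" "t *\<^sub>R i"] i by simp
        ultimately have "norm (x + t *\<^sub>R i) > 2" by linarith
        then show "\<Phi> (x + t *\<^sub>R i) = 0" using Phi_supp[OF Phi] by force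
      qed
    qed
    have "((\<lambda>t. \<Phi> (x + t *\<^sub>R i)) has_real_derivative 0) (at 0)"
      using DERIV_cong_ev[OF refl ev refl] by simp
    then show ?thesis using DERIV_unique g by blast
  qed
  have "compact (g ` cball 0 2)"
    using compact_continuous_image[OF continuous_on_subset[OF gc subset_UNIV]] compact_cball by blast
  then have "bounded (g ` cball 0 2)" by (rule compact_imp_bounded)
  then obtain M where M0: "\<forall>y\<in>g ` cball 0 2. norm y \<le> M"
    unfolding bounded_iff by blast
  have M: "norm (g x) \<le> M" if "x \<in> cball 0 2" for x using M0 that by blast
  define M' where "M' = max M 0"
  have gb: "\<bar>g x\<bar> \<le> M'" for x
    using M[of x] g0[of x] unfolding M'_def by (cases "norm x \<le> 2") auto
  have "\<bar>\<Phi> (x + t *\<^sub>R i) - \<Phi> x\<bar> \<le> M' * \<bar>t\<bar>" for x t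
  proof -
    let ?h = "\<lambda>s. \<Phi> (x + s *\<^sub>R i)"
    have d: "(?h has_field_derivative g (x + s *\<^sub>R i)) (at s within UNIV)" for s
    proof -
      have "((\<lambda>u. \<Phi> ((x + s *\<^sub>R i) + u *\<^sub>R i)) has_real_derivative g (x + s *\<^sub>R i)) (at 0)"
        by (rule g)
      then have "((\<lambda>u. ?h (u + s)) has_real_derivative g (x + s *\<^sub>R i)) (at 0)"
        by (simp add: algebra_simps scaleR_add_left)
      then show ?thesis using DERIV_shift[of ?h _ 0 s] by simp
    qed
    have "norm (?h t - ?h 0) \<le> M' * norm (t - 0)"
      by (rule field_differentiable_bound[OF convex_UNIV d]) (use gb in auto)
    then show ?thesis by simp
  qed
  then show ?thesis unfolding M'_def by (intro exI[of _ "max M 0"]) auto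
qed

lemma Phi_lip:
  assumes Phi: "admissible_Phi \<Phi>"
  shows "\<exists>L\<ge>0. \<forall>u w. \<bar>\<Phi> (u + w) - \<Phi> u\<bar> \<le> L * norm w"
proof -
  have "\<forall>i\<in>Basis. \<exists>M\<ge>0. \<forall>x t. \<bar>\<Phi> (x + t *\<^sub>R i) - \<Phi> x\<bar> \<le> M * \<bar>t\<bar>"
    using Phi_coord_lip[OF Phi] by blast
  then obtain Mf where Mf: "\<And>i x t. i \<in> Basis \<Longrightarrow> \<bar>\<Phi> (x + t *\<^sub>R i) - \<Phi> x\<bar> \<le> Mf i * \<bar>t\<bar>"
    "\<And>i. i \<in> Basis \<Longrightarrow> Mf i \<ge> 0"
    by metis
  define M where "M = (\<Sum>i\<in>Basis. Mf i)"
  have Mfle: "Mf i \<le> M" if "i \<in> Basis" for i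
    unfolding M_def using that Mf(2) by (intro member_le_sum) auto
  have M0: "M \<ge> 0" unfolding M_def using Mf(2) by (simp add: sum_nonneg)
  have main: "S \<subseteq> Basis \<Longrightarrow> \<bar>\<Phi> (u + (\<Sum>i\<in>S. (w \<bullet> i) *\<^sub>R i)) - \<Phi> u\<bar> \<le> M * (\<Sum>i\<in>S. \<bar>w \<bullet> i\<bar>)"
    for S u w
  proof (induction S rule: infinite_finite_induct)
    case (infinite A)
    then show ?case using finite_Basis finite_subset by blast
  next
    case empty
    then show ?case by simp
  next
    case (insert i F)
    let ?v = "u + (\<Sum>i\<in>F. (w \<bullet> i) *\<^sub>R i)"
    have eq: "u + (\<Sum>i\<in>insert i F. (w \<bullet> i) *\<^sub>R i) = ?v + (w \<bullet> i) *\<^sub>R i"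
      using insert by (simp add: algebra_simps)
    have i: "i \<in> Basis" using insert by auto
    have "\<bar>\<Phi> (?v + (w \<bullet> i) *\<^sub>R i) - \<Phi> ?v\<bar> \<le> M * \<bar>w \<bullet> i\<bar>"
      using Mf(1)[OF i, of ?v "w \<bullet> i"] Mfle[OF i] by (meson abs_ge_zero mult_right_mono order_trans)
    moreover have "\<bar>\<Phi> ?v - \<Phi> u\<bar> \<le> M * (\<Sum>i\<in>F. \<bar>w \<bullet> i\<bar>)" using insert by auto
    ultimately show ?case using insert eq by (simp add: algebra_simps)
  qed
  have "\<bar>\<Phi> (u + w) - \<Phi> u\<bar> \<le> (M * real DIM('a)) * norm w" for u w :: 'a
  proof -
    have "\<bar>\<Phi> (u + w) - \<Phi> u\<bar> \<le> M * (\<Sum>i\<in>Basis. \<bar>w \<bullet> i\<bar>)"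
      using main[of Basis u w] by (simp add: euclidean_representation)
    also have "M * (\<Sum>i\<in>Basis. \<bar>w \<bullet> i\<bar>) \<le> M * (\<Sum>i\<in>(Basis::'a set). norm w)"
      by (intro mult_left_mono[OF _ M0] sum_mono Basis_le_norm)
    also have "\<dots> = (M * real DIM('a)) * norm w" by simp
    finally show ?thesis .
  qed
  then show ?thesis using M0 by (intro exI[of _ "M * real DIM('a)"]) auto
qed

lemma admD:
  assumes "admissible_Phi \<Phi>"
  shows "smooth_fn \<Phi>" "\<And>x. 0 \<le> \<Phi> x"
    "\<And>x. x \<noteq> 0 \<Longrightarrow> ((\<lambda>j. Phi_j \<Phi> j x) has_sum 1) (UNIV :: int set)"
proof -
  note a = assms[unfolded admissible_Phi_def]
  show "smooth_fn \<Phi>" using a by (rule conjunct1)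
  show "0 \<le> \<Phi> x" for x using a[THEN conjunct2, THEN conjunct2, THEN conjunct1] by (rule spec)
  show "((\<lambda>j. Phi_j \<Phi> j x) has_sum 1) (UNIV :: int set)" if "x \<noteq> 0" for x
    using a[THEN conjunct2, THEN conjunct2, THEN conjunct2, THEN conjunct2, THEN spec, of x] that by (rule mp)
qed

lemma Phi_bounds:
  assumes Phi: "admissible_Phi \<Phi>"
  shows "0 \<le> \<Phi> u" "\<Phi> u \<le> 1"
proof -
  show "0 \<le> \<Phi> u" using admD(2)[OF Phi] .
  show "\<Phi> u \<le> 1"
  proof (cases "u = 0")
    case True
    have "\<Phi> 0 = 0"
    proof (rule ccontr)
      assume "\<Phi> 0 \<noteq> 0"
      from Phi_supp(1)[OF Phi this] show False by simp
    qed
    then show ?thesis using True by simp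
  next
    case False
    define s where "s = sqrt (real DIM('a))"
    have s: "s > 0" unfolding s_def by simp
    define x where "x = s *\<^sub>R u"
    have x0: "x \<noteq> 0" using False s unfolding x_def by simp
    have hs: "((\<lambda>j. Phi_j \<Phi> j x) has_sum 1) (UNIV :: int set)"
      using admD(3)[OF Phi x0] .
    have "Phi_j \<Phi> 0 x = \<Phi> u"
      unfolding Phi_j_def x_def s_def[symmetric] using s by simp
    moreover have "(\<lambda>j. Phi_j \<Phi> j x) 0 \<le> 1"
    proof -
      have "((\<lambda>j. Phi_j \<Phi> j x) has_sum (\<lambda>j. Phi_j \<Phi> j x) 0) {0::int}"
        using has_sum_finite[of "{0::int}" "\<lambda>j. Phi_j \<Phi> j x"] by simp
      then show ?thesis
      proof (rule has_sum_mono_neutral[OF _ hs])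
        fix k :: int assume "k \<in> UNIV - {0}"
        show "0 \<le> Phi_j \<Phi> k x" unfolding Phi_j_def by (rule admD(2)[OF Phi])
      qed auto
    qed
    ultimately show ?thesis by simp
  qed
qed

lemma Phi_meas:
  assumes Phi: "admissible_Phi \<Phi>"
  shows "\<Phi> \<in> borel_measurable borel"
proof -
  have "smooth_fn \<Phi>" using admD(1)[OF Phi] .
  then have "continuous_on UNIV \<Phi>" by cases
  then show ?thesis by (rule borel_measurable_continuous_onI)
qed

lemma K_meas2:
  fixes K :: "'a::euclidean_space \<Rightarrow> 'a \<Rightarrow> real"
  assumes K_meas: "(\<lambda>(x, y). K x y) \<in> borel_measurable borel"
    and f: "f \<in> M \<rightarrow>\<^sub>M borel" and g: "g \<in> M \<rightarrow>\<^sub>M borel"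
  shows "(\<lambda>w. K (f w) (g w)) \<in> borel_measurable M"
proof -
  have "(\<lambda>w. (f w, g w)) \<in> M \<rightarrow>\<^sub>M (borel :: ('a \<times> 'a) measure)"
    using measurable_Pair[OF f g] unfolding borel_prod .
  then have "(\<lambda>w. (\<lambda>(x, y). K x y) (f w, g w)) \<in> borel_measurable M"
    using K_meas by (rule measurable_compose)
  then show ?thesis by simp
qed

lemma powr_sum_le:
  fixes a b q :: real
  assumes "0 \<le> a" "0 \<le> b" "0 < q"
  shows "(a + b) powr q \<le> 2 powr q * (a powr q + b powr q)"
proof -
  have "(a + b) powr q \<le> (2 * max a b) powr q"
    using assms by (intro powr_mono2) auto
  also have "\<dots> = 2 powr q * max a b powr q"
    using assms by (simp add: powr_mult)
  also have "max a b powr q \<le> a powr q + b powr q"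
    by (cases "a \<le> b") (auto simp: max_def)
  then have "2 powr q * max a b powr q \<le> 2 powr q * (a powr q + b powr q)"
    by (intro mult_left_mono) auto
  finally show ?thesis .
qed

lemma Phij_facts:
  fixes \<Phi> :: "'a::euclidean_space \<Rightarrow> real"
  assumes Phi: "admissible_Phi \<Phi>"
    and Lip: "\<forall>u w. \<bar>\<Phi> (u + w) - \<Phi> u\<bar> \<le> L * norm w"
    and rho: "\<rho> = 2 powr real_of_int j * sqrt (real DIM('a))"
  shows "Phi_j \<Phi> j v \<noteq> 0 \<Longrightarrow> \<rho> / 2 \<le> norm v \<and> norm v \<le> 2 * \<rho>"
    and "0 \<le> Phi_j \<Phi> j v" "Phi_j \<Phi> j v \<le> 1"
    and "\<bar>Phi_j \<Phi> j (v + w) - Phi_j \<Phi> j v\<bar> \<le> L * norm w / \<rho>"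
proof -
  have rp: "\<rho> > 0" using rho by simp
  have eq: "Phi_j \<Phi> j v = \<Phi> (v /\<^sub>R \<rho>)" for v unfolding Phi_j_def rho ..
  show "0 \<le> Phi_j \<Phi> j v" "Phi_j \<Phi> j v \<le> 1" unfolding eq using Phi_bounds[OF Phi] by auto
  show "\<rho> / 2 \<le> norm v \<and> norm v \<le> 2 * \<rho>" if "Phi_j \<Phi> j v \<noteq> 0"
  proof -
    have nz: "\<Phi> (v /\<^sub>R \<rho>) \<noteq> 0" using that unfolding eq .
    have "1/2 \<le> norm (v /\<^sub>R \<rho>)" "norm (v /\<^sub>R \<rho>) \<le> 2"
      using Phi_supp[OF Phi nz] by auto
    moreover have "norm (v /\<^sub>R \<rho>) = norm v / \<rho>" using rp by (simp add: divide_inverse_commute)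
    ultimately show ?thesis using rp by (auto simp: field_simps)
  qed
  have that_aux: "\<bar>\<Phi> (v /\<^sub>R \<rho> + w /\<^sub>R \<rho>) - \<Phi> (v /\<^sub>R \<rho>)\<bar> \<le> L * norm (w /\<^sub>R \<rho>)"
    using Lip by blast
  show "\<bar>Phi_j \<Phi> j (v + w) - Phi_j \<Phi> j v\<bar> \<le> L * norm w / \<rho>"
  proof -
    have e2: "L * (inverse \<rho> * norm w) = L * norm w / \<rho>" by (simp add: divide_inverse)
    show ?thesis using that_aux unfolding eq using rp e2 by (simp add: scaleR_add_right)
  qed
qed

lemma pointwise:
  fixes K :: "'a::euclidean_space \<Rightarrow> 'a \<Rightarrow> real" and \<Phi> :: "'a \<Rightarrow> real"
  assumes Phi: "admissible_Phi \<Phi>"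
    and Lip: "\<forall>u w. \<bar>\<Phi> (u + w) - \<Phi> u\<bar> \<le> L * norm w" and L0: "0 \<le> L"
    and K_size: "\<forall>x y. x \<noteq> y \<longrightarrow> \<bar>K x y\<bar> \<le> C\<^sub>1 * norm (x - y) powr (- real DIM('a))"
    and C0: "0 \<le> C\<^sub>1"
    and rho: "\<rho> = 2 powr real_of_int j * sqrt (real DIM('a))"
    and z: "norm z \<le> r" and r: "r \<le> \<rho> / 4"
    and q: "1 \<le> q"
  shows "\<bar>K_j K \<Phi> j x (y + z) - K_j K \<Phi> j x y\<bar> powr q \<le>
     2 powr q * (indicator {x. \<rho>/2 \<le> norm (x - y) \<and> norm (x - y) \<le> \<rho>} x * \<bar>K x (y + z) - K x y\<bar> powr q
       + indicator {x. \<rho> \<le> norm (x - y) \<and> norm (x - y) \<le> 2 * \<rho>} x * \<bar>K x (y + z) - K x y\<bar> powr q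
       + (C\<^sub>1 * (\<rho> / 4) powr (- real DIM('a)) * L * r / \<rho>) powr q * indicator (cball y (4 * \<rho>)) x)"
proof -
  have rp: "\<rho> > 0" using rho by simp
  define P1 where "P1 = Phi_j \<Phi> j (x - y)"
  define P2 where "P2 = Phi_j \<Phi> j (x - (y + z))"
  define D where "D = \<bar>K x (y + z) - K x y\<bar>"
  define \<beta> where "\<beta> = C\<^sub>1 * (\<rho> / 4) powr (- real DIM('a)) * L * r / \<rho>"
  define A where "A = D * P1"
  define B where "B = \<bar>K x (y + z)\<bar> * \<bar>P2 - P1\<bar>"
  note F = Phij_facts[OF Phi Lip rho]
  have P1: "0 \<le> P1" "P1 \<le> 1" unfolding P1_def using F by auto
  have P2: "0 \<le> P2" "P2 \<le> 1" unfolding P2_def using F by auto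
  have diff: "K_j K \<Phi> j x (y + z) - K_j K \<Phi> j x y = (K x (y + z) - K x y) * P1 + K x (y + z) * (P2 - P1)"
    unfolding K_j_def P1_def P2_def by (simp add: algebra_simps)
  have AB: "\<bar>K_j K \<Phi> j x (y + z) - K_j K \<Phi> j x y\<bar> \<le> A + B"
  proof -
    have "\<bar>(K x (y + z) - K x y) * P1 + K x (y + z) * (P2 - P1)\<bar> \<le> \<bar>(K x (y + z) - K x y) * P1\<bar> + \<bar>K x (y + z) * (P2 - P1)\<bar>"
      by (rule abs_triangle_ineq)
    also have "\<dots> = \<bar>K x (y + z) - K x y\<bar> * P1 + \<bar>K x (y + z)\<bar> * \<bar>P2 - P1\<bar>"
      using P1 by (simp add: abs_mult)
    finally show ?thesis unfolding diff A_def B_def D_def .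
  qed
  have A0: "0 \<le> A" "0 \<le> B" unfolding A_def B_def D_def using P1 by auto
  let ?I1 = "indicator {x. \<rho>/2 \<le> norm (x - y) \<and> norm (x - y) \<le> \<rho>} x :: real"
  let ?I2 = "indicator {x. \<rho> \<le> norm (x - y) \<and> norm (x - y) \<le> 2 * \<rho>} x :: real"
  let ?I3 = "indicator (cball y (4 * \<rho>)) x :: real"
  have Aq: "A powr q \<le> ?I1 * D powr q + ?I2 * D powr q"
  proof (cases "P1 = 0")
    case True
    then show ?thesis unfolding A_def using q by (simp add: indicator_def)
  next
    case False
    then have "\<rho>/2 \<le> norm (x - y) \<and> norm (x - y) \<le> 2 * \<rho>" using F(1) unfolding P1_def by blast
    then have "?I1 + ?I2 \<ge> 1" by (auto simp: indicator_def)
    moreover have "A powr q \<le> D powr q"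
    proof -
      have "A \<le> D" unfolding A_def using P1 D_def by (simp add: mult_left_le)
      then show ?thesis using P1 q unfolding A_def D_def by (intro powr_mono2) auto
    qed
    moreover have "1 * D powr q \<le> (?I1 + ?I2) * D powr q"
      using calculation(1) by (intro mult_right_mono) auto
    ultimately have "A powr q \<le> (?I1 + ?I2) * D powr q" by simp
    then show ?thesis by (simp add: algebra_simps)
  qed
  have Bq: "B powr q \<le> \<beta> powr q * ?I3"
  proof (cases "P2 = P1")
    case True
    then show ?thesis unfolding B_def using q by (simp add: indicator_def)
  next
    case False
    then have "P1 \<noteq> 0 \<or> P2 \<noteq> 0" by auto
    then have n1: "norm (x - (y + z)) \<ge> \<rho> / 4 \<and> norm (x - y) \<le> 4 * \<rho>"
    proof
      assume "P1 \<noteq> 0"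
      then have h: "\<rho>/2 \<le> norm (x - y) \<and> norm (x - y) \<le> 2 * \<rho>" using F(1) unfolding P1_def by blast
      have "norm (x - y) \<le> norm (x - (y + z)) + norm z"
        using norm_triangle_ineq[of "x - (y + z)" z] by (simp add: algebra_simps)
      then show ?thesis using h z r rp by linarith
    next
      assume "P2 \<noteq> 0"
      then have h: "\<rho>/2 \<le> norm (x - (y + z)) \<and> norm (x - (y + z)) \<le> 2 * \<rho>" using F(1) unfolding P2_def by blast
      have "norm (x - y) \<le> norm (x - (y + z)) + norm z"
        using norm_triangle_ineq[of "x - (y + z)" z] by (simp add: algebra_simps)
      then show ?thesis using h z r rp by linarith
    qed
    have I3: "?I3 = 1" using n1 by (simp add: indicator_def dist_norm norm_minus_commute)
    have ne: "x \<noteq> y + z" using n1 rp by auto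
    have Kb: "\<bar>K x (y + z)\<bar> \<le> C\<^sub>1 * (\<rho> / 4) powr (- real DIM('a))"
    proof -
      have "\<bar>K x (y + z)\<bar> \<le> C\<^sub>1 * norm (x - (y + z)) powr (- real DIM('a))"
        using K_size ne by blast
      also have "\<dots> \<le> C\<^sub>1 * (\<rho> / 4) powr (- real DIM('a))"
        using n1 rp C0 by (intro mult_left_mono powr_mono2') auto
      finally show ?thesis .
    qed
    have Pd: "\<bar>P2 - P1\<bar> \<le> L * r / \<rho>"
    proof -
      have "\<bar>Phi_j \<Phi> j ((x - y) + (- z)) - Phi_j \<Phi> j (x - y)\<bar> \<le> L * norm (- z) / \<rho>" by (rule F(4))
      then have "\<bar>P2 - P1\<bar> \<le> L * norm (- z) / \<rho>" unfolding P2_def P1_def by (simp add: algebra_simps)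
      also have "\<dots> \<le> L * r / \<rho>" using z L0 rp by (auto intro!: divide_right_mono mult_left_mono)
      finally show ?thesis .
    qed
    have "B \<le> (C\<^sub>1 * (\<rho> / 4) powr (- real DIM('a))) * (L * r / \<rho>)" unfolding B_def
      using Kb Pd C0 by (intro mult_mono) auto
    then have "B \<le> \<beta>" unfolding \<beta>_def by simp
    then have "B powr q \<le> \<beta> powr q" using A0 q by (intro powr_mono2) auto
    then show ?thesis using I3 by simp
  qed
  have "\<bar>K_j K \<Phi> j x (y + z) - K_j K \<Phi> j x y\<bar> powr q \<le> (A + B) powr q"
    using AB q by (intro powr_mono2) auto
  also have "\<dots> \<le> 2 powr q * (A powr q + B powr q)"
    using A0 q by (intro powr_sum_le) auto
  also have "\<dots> \<le> 2 powr q * ((?I1 * D powr q + ?I2 * D powr q) + \<beta> powr q * ?I3)"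
    using Aq Bq by (intro mult_left_mono add_mono) auto
  finally show ?thesis unfolding D_def \<beta>_def by (simp add: algebra_simps)
qed

lemma ennreal_ind_mult: "ennreal (indicator A x * c) = indicator A x * ennreal c"
  by (simp add: indicator_def)

lemma annulus_sets: "{x::'a::euclidean_space. a \<le> norm (x - y) \<and> norm (x - y) \<le> b} \<in> sets lborel"
proof -
  have "closed {x::'a. a \<le> norm (x - y) \<and> norm (x - y) \<le> b}"
    by (intro closed_Collect_conj closed_Collect_le continuous_intros)
  then show ?thesis by simp
qed

lemma K_meas_x:
  fixes K :: "'a::euclidean_space \<Rightarrow> 'a \<Rightarrow> real"
  assumes K_meas: "(\<lambda>(x, y). K x y) \<in> borel_measurable borel"
  shows "(\<lambda>x. K x c) \<in> borel_measurable lborel"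
proof -
  have "(\<lambda>x. K ((\<lambda>x. x) x) ((\<lambda>_. c) x)) \<in> borel_measurable borel"
    by (rule K_meas2[OF K_meas]) auto
  then show ?thesis by simp
qed

lemma K_meas_prod:
  fixes K :: "'a::euclidean_space \<Rightarrow> 'a \<Rightarrow> real"
  assumes K_meas: "(\<lambda>(x, y). K x y) \<in> borel_measurable borel"
  shows "(\<lambda>p. K (snd p) (y + fst p)) \<in> borel_measurable (borel :: ('a \<times> 'a) measure)"
    "(\<lambda>p. K (snd p) y) \<in> borel_measurable (borel :: ('a \<times> 'a) measure)"
proof -
  have s: "snd \<in> (borel :: ('a \<times> 'a) measure) \<rightarrow>\<^sub>M borel"
    by (intro borel_measurable_continuous_onI continuous_on_snd continuous_on_id)
  have f: "(\<lambda>p. y + fst p) \<in> (borel :: ('a \<times> 'a) measure) \<rightarrow>\<^sub>M borel"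
    by (intro borel_measurable_continuous_onI continuous_intros)
  show "(\<lambda>p. K (snd p) (y + fst p)) \<in> borel_measurable (borel :: ('a \<times> 'a) measure)"
    by (rule K_meas2[OF K_meas s f])
  show "(\<lambda>p. K (snd p) y) \<in> borel_measurable (borel :: ('a \<times> 'a) measure)"
    by (rule K_meas2[OF K_meas s]) auto
qed

lemma P_meas:
  fixes K :: "'a::euclidean_space \<Rightarrow> 'a \<Rightarrow> real"
  assumes K_meas: "(\<lambda>(x, y). K x y) \<in> borel_measurable borel"
  shows "(\<lambda>z. \<integral>\<^sup>+ x. indicator {x. a \<le> norm (x - y) \<and> norm (x - y) \<le> b} x *
            ennreal (\<bar>K x (y + z) - K x y\<bar> powr q) \<partial>lborel) \<in> borel_measurable lborel"
proof -
  let ?A = "{x::'a. a \<le> norm (x - y) \<and> norm (x - y) \<le> b}"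
  have A: "?A \<in> sets borel" using annulus_sets[of a y b] by simp
  note [measurable] = K_meas_prod[OF K_meas, of y] A
  have s[measurable]: "snd \<in> (borel :: ('a \<times> 'a) measure) \<rightarrow>\<^sub>M borel"
    by (intro borel_measurable_continuous_onI continuous_on_snd continuous_on_id)
  have "(\<lambda>p::'a\<times>'a. indicator ?A (snd p) * ennreal (\<bar>K (snd p) (y + fst p) - K (snd p) y\<bar> powr q))
      \<in> borel_measurable borel"
    by measurable
  then have "case_prod (\<lambda>z x. indicator ?A x * ennreal (\<bar>K x (y + z) - K x y\<bar> powr q))
      \<in> borel_measurable (lborel \<Otimes>\<^sub>M lborel)"
    unfolding lborel_prod by (simp add: case_prod_beta')
  then show ?thesis by (rule lborel.borel_measurable_nn_integral)
qed

lemma inner_bound: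
  fixes K :: "'a::euclidean_space \<Rightarrow> 'a \<Rightarrow> real" and \<Phi> :: "'a \<Rightarrow> real"
  assumes Phi: "admissible_Phi \<Phi>"
    and K_meas: "(\<lambda>(x, y). K x y) \<in> borel_measurable borel"
    and Lip: "\<forall>u w. \<bar>\<Phi> (u + w) - \<Phi> u\<bar> \<le> L * norm w" and L0: "0 \<le> L"
    and K_size: "\<forall>x y. x \<noteq> y \<longrightarrow> \<bar>K x y\<bar> \<le> C\<^sub>1 * norm (x - y) powr (- real DIM('a))"
    and C0: "0 \<le> C\<^sub>1"
    and rho: "\<rho> = 2 powr real_of_int j * sqrt (real DIM('a))"
    and z: "norm z \<le> r" and r: "r \<le> \<rho> / 4"
    and q: "1 \<le> q"
    and a1: "a1 = \<rho>/2" and b1: "b1 = \<rho>" and b2: "b2 = 2 * \<rho>"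
  shows "(\<integral>\<^sup>+ x. ennreal (\<bar>K_j K \<Phi> j x (y + z) - K_j K \<Phi> j x y\<bar> powr q) \<partial>lborel) \<le>
     ennreal (2 powr q) * ((\<integral>\<^sup>+ x. indicator {x. a1 \<le> norm (x - y) \<and> norm (x - y) \<le> b1} x * ennreal (\<bar>K x (y + z) - K x y\<bar> powr q) \<partial>lborel)
       + (\<integral>\<^sup>+ x. indicator {x. b1 \<le> norm (x - y) \<and> norm (x - y) \<le> b2} x * ennreal (\<bar>K x (y + z) - K x y\<bar> powr q) \<partial>lborel)
       + ennreal ((C\<^sub>1 * (\<rho> / 4) powr (- real DIM('a)) * L * r / \<rho>) powr q) * emeasure lborel (cball y (4 * \<rho>)))"
proof -
  let ?A1 = "{x. a1 \<le> norm (x - y) \<and> norm (x - y) \<le> b1}"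
  let ?A2 = "{x. b1 \<le> norm (x - y) \<and> norm (x - y) \<le> b2}"
  let ?D = "\<lambda>x. \<bar>K x (y + z) - K x y\<bar> powr q"
  let ?c = "(C\<^sub>1 * (\<rho> / 4) powr (- real DIM('a)) * L * r / \<rho>) powr q"
  have pw: "ennreal (\<bar>K_j K \<Phi> j x (y + z) - K_j K \<Phi> j x y\<bar> powr q) \<le>
     ennreal (2 powr q) * (indicator ?A1 x * ennreal (?D x) + indicator ?A2 x * ennreal (?D x)
        + ennreal ?c * indicator (cball y (4 * \<rho>)) x)" for x
  proof -
    have "\<bar>K_j K \<Phi> j x (y + z) - K_j K \<Phi> j x y\<bar> powr q \<le>
      2 powr q * (indicator ?A1 x * ?D x + indicator ?A2 x * ?D x + ?c * indicator (cball y (4 * \<rho>)) x)"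
      using pointwise[OF Phi Lip L0 K_size C0 rho z r q, of x y] unfolding a1 b1 b2 by simp
    then have "ennreal (\<bar>K_j K \<Phi> j x (y + z) - K_j K \<Phi> j x y\<bar> powr q) \<le>
      ennreal (2 powr q * (indicator ?A1 x * ?D x + indicator ?A2 x * ?D x + ?c * indicator (cball y (4 * \<rho>)) x))"
      by (rule ennreal_leI)
    also have "\<dots> = ennreal (2 powr q) * (indicator ?A1 x * ennreal (?D x) + indicator ?A2 x * ennreal (?D x)
        + ennreal ?c * indicator (cball y (4 * \<rho>)) x)"
    proof -
      let ?u1 = "indicator ?A1 x * ?D x" and ?u2 = "indicator ?A2 x * ?D x"
        and ?u3 = "?c * indicator (cball y (4 * \<rho>)) x"
      have n: "0 \<le> ?u1" "0 \<le> ?u2" "0 \<le> ?u3" by (auto simp: indicator_def)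
      have "ennreal (2 powr q * (?u1 + ?u2 + ?u3)) = ennreal (2 powr q) * ennreal (?u1 + ?u2 + ?u3)"
        using n by (intro ennreal_mult) auto
      also have "ennreal (?u1 + ?u2 + ?u3) = ennreal ?u1 + ennreal ?u2 + ennreal ?u3"
        using n by (simp add: ennreal_plus)
      also have "ennreal ?u3 = ennreal ?c * indicator (cball y (4 * \<rho>)) x"
        by (simp add: indicator_def)
      finally show ?thesis by (simp only: ennreal_ind_mult)
    qed
    finally show ?thesis .
  qed
  have mD: "(\<lambda>x. ennreal (?D x)) \<in> borel_measurable lborel"
    using K_meas_x[OF K_meas, of "y + z"] K_meas_x[OF K_meas, of y] by measurable
  have s1: "?A1 \<in> sets lborel" "?A2 \<in> sets lborel" by (rule annulus_sets)+
  have "(\<integral>\<^sup>+ x. ennreal (\<bar>K_j K \<Phi> j x (y + z) - K_j K \<Phi> j x y\<bar> powr q) \<partial>lborel) \<le>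
     (\<integral>\<^sup>+ x. ennreal (2 powr q) * (indicator ?A1 x * ennreal (?D x) + indicator ?A2 x * ennreal (?D x)
        + ennreal ?c * indicator (cball y (4 * \<rho>)) x) \<partial>lborel)"
    by (rule nn_integral_mono) (rule pw)
  also have "\<dots> = ennreal (2 powr q) * ((\<integral>\<^sup>+ x. indicator ?A1 x * ennreal (?D x) \<partial>lborel)
       + (\<integral>\<^sup>+ x. indicator ?A2 x * ennreal (?D x) \<partial>lborel)
       + (\<integral>\<^sup>+ x. ennreal ?c * indicator (cball y (4 * \<rho>)) x \<partial>lborel))"
  proof -
    let ?f1 = "\<lambda>x. indicator ?A1 x * ennreal (?D x)" and ?f2 = "\<lambda>x. indicator ?A2 x * ennreal (?D x)"
      and ?f3 = "\<lambda>x. ennreal ?c * indicator (cball y (4 * \<rho>)) x"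
    have m1: "?f1 \<in> borel_measurable lborel" using mD s1(1) by (intro borel_measurable_times_ennreal borel_measurable_indicator)
    have m2: "?f2 \<in> borel_measurable lborel" using mD s1(2) by (intro borel_measurable_times_ennreal borel_measurable_indicator)
    have m3: "?f3 \<in> borel_measurable lborel" by (intro borel_measurable_times_ennreal borel_measurable_indicator borel_measurable_const) simp
    have m12: "(\<lambda>x. ?f1 x + ?f2 x) \<in> borel_measurable lborel" using m1 m2 by (rule borel_measurable_add)
    have m123: "(\<lambda>x. ?f1 x + ?f2 x + ?f3 x) \<in> borel_measurable lborel" using m12 m3 by (rule borel_measurable_add)
    have "(\<integral>\<^sup>+ x. ennreal (2 powr q) * (?f1 x + ?f2 x + ?f3 x) \<partial>lborel) = ennreal (2 powr q) * (\<integral>\<^sup>+ x. (?f1 x + ?f2 x + ?f3 x) \<partial>lborel)"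
      using m123 by (rule nn_integral_cmult)
    also have "(\<integral>\<^sup>+ x. (?f1 x + ?f2 x + ?f3 x) \<partial>lborel) = (\<integral>\<^sup>+ x. (?f1 x + ?f2 x) \<partial>lborel) + (\<integral>\<^sup>+ x. ?f3 x \<partial>lborel)"
      using m12 m3 by (rule nn_integral_add)
    also have "(\<integral>\<^sup>+ x. (?f1 x + ?f2 x) \<partial>lborel) = (\<integral>\<^sup>+ x. ?f1 x \<partial>lborel) + (\<integral>\<^sup>+ x. ?f2 x \<partial>lborel)"
      using m1 m2 by (rule nn_integral_add)
    finally show ?thesis .
  qed
  also have "(\<integral>\<^sup>+ x. ennreal ?c * indicator (cball y (4 * \<rho>)) x \<partial>lborel) = ennreal ?c * emeasure lborel (cball y (4 * \<rho>))"
    by (rule nn_integral_cmult_indicator) simp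
  finally show ?thesis .
qed

lemma outer_bound:
  fixes K :: "'a::euclidean_space \<Rightarrow> 'a \<Rightarrow> real" and \<Phi> :: "'a \<Rightarrow> real"
  assumes Phi: "admissible_Phi \<Phi>"
    and K_meas: "(\<lambda>(x, y). K x y) \<in> borel_measurable borel"
    and Lip: "\<forall>u w. \<bar>\<Phi> (u + w) - \<Phi> u\<bar> \<le> L * norm w" and L0: "0 \<le> L"
    and K_size: "\<forall>x y. x \<noteq> y \<longrightarrow> \<bar>K x y\<bar> \<le> C\<^sub>1 * norm (x - y) powr (- real DIM('a))"
    and C0: "0 \<le> C\<^sub>1"
    and rho: "\<rho> = 2 powr real_of_int j * sqrt (real DIM('a))"
    and r: "R \<le> \<rho> / 4"
    and q: "1 \<le> q"
    and a1: "2 ^ n * R = \<rho>/2" and b1: "2 ^ (n + 1) * R = \<rho>" and b2: "2 ^ (n + 1 + 1) * R = 2 * \<rho>"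
  shows "(\<integral>\<^sup>+ z. indicator (ball 0 R) z * (\<integral>\<^sup>+ x. ennreal (\<bar>K_j K \<Phi> j x (y + z) - K_j K \<Phi> j x y\<bar> powr q) \<partial>lborel) \<partial>lborel) \<le>
     ennreal (2 powr q) * (
       (\<integral>\<^sup>+ v. indicator (cball (0::'a) R) v *
             (\<integral>\<^sup>+ x. indicator {x. 2 ^ n * R \<le> norm (x - y) \<and> norm (x - y) \<le> 2 ^ (n + 1) * R} x *
                     ennreal (\<bar>K x (y + v) - K x y\<bar> powr q) \<partial>lborel) \<partial>lborel)
     + (\<integral>\<^sup>+ v. indicator (cball (0::'a) R) v *
             (\<integral>\<^sup>+ x. indicator {x. 2 ^ (n + 1) * R \<le> norm (x - y) \<and> norm (x - y) \<le> 2 ^ (n + 1 + 1) * R} x *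
                     ennreal (\<bar>K x (y + v) - K x y\<bar> powr q) \<partial>lborel) \<partial>lborel)
     + ennreal ((C\<^sub>1 * (\<rho> / 4) powr (- real DIM('a)) * L * R / \<rho>) powr q) * emeasure lborel (cball y (4 * \<rho>))
        * emeasure lborel (ball (0::'a) R))"
proof -
  let ?P1 = "\<lambda>v. \<integral>\<^sup>+ x. indicator {x. 2 ^ n * R \<le> norm (x - y) \<and> norm (x - y) \<le> 2 ^ (n + 1) * R} x *
                     ennreal (\<bar>K x (y + v) - K x y\<bar> powr q) \<partial>lborel"
  let ?P2 = "\<lambda>v. \<integral>\<^sup>+ x. indicator {x. 2 ^ (n + 1) * R \<le> norm (x - y) \<and> norm (x - y) \<le> 2 ^ (n + 1 + 1) * R} x *
                     ennreal (\<bar>K x (y + v) - K x y\<bar> powr q) \<partial>lborel"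
  let ?E = "ennreal ((C\<^sub>1 * (\<rho> / 4) powr (- real DIM('a)) * L * R / \<rho>) powr q) * emeasure lborel (cball y (4 * \<rho>))"
  let ?I = "\<lambda>z. \<integral>\<^sup>+ x. ennreal (\<bar>K_j K \<Phi> j x (y + z) - K_j K \<Phi> j x y\<bar> powr q) \<partial>lborel"
  have pw: "indicator (ball 0 R) z * ?I z \<le>
      ennreal (2 powr q) * (indicator (cball 0 R) z * ?P1 z + indicator (cball 0 R) z * ?P2 z + ?E * indicator (ball 0 R) z)" for z
  proof (cases "z \<in> ball 0 R")
    case True
    then have z: "norm z \<le> R" by simp
    have "?I z \<le> ennreal (2 powr q) * (?P1 z + ?P2 z + ?E)"
      using inner_bound[OF Phi K_meas Lip L0 K_size C0 rho z r q a1 b1 b2, of y] .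
    moreover have i1: "indicator (ball 0 R) z = (1::ennreal)" using True by simp
    moreover have i2: "indicator (cball 0 R) z = (1::ennreal)" using True by (simp add: indicator_def)
    ultimately show ?thesis by (simp only: mult_1 mult_1_right)
  next
    case False
    then have i1: "indicator (ball 0 R) z = (0::ennreal)" by simp
    show ?thesis unfolding i1 by (simp only: mult_zero_left zero_le)
  qed
  have m1: "?P1 \<in> borel_measurable lborel" by (rule P_meas[OF K_meas, where a="2 ^ n * R" and b="2 ^ (n + 1) * R" and y=y and q=q])
  have m2: "?P2 \<in> borel_measurable lborel" by (rule P_meas[OF K_meas, where a="2 ^ (n + 1) * R" and b="2 ^ (n + 1 + 1) * R" and y=y and q=q])
  let ?f1 = "\<lambda>z. indicator (cball 0 R) z * ?P1 z" and ?f2 = "\<lambda>z. indicator (cball 0 R) z * ?P2 z"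
    and ?f3 = "\<lambda>z::'a. ?E * indicator (ball 0 R) z"
  have cb: "cball (0::'a) R \<in> sets lborel" "ball (0::'a) R \<in> sets lborel" by simp_all
  have mf1: "?f1 \<in> borel_measurable lborel" by (rule borel_measurable_times_ennreal[OF borel_measurable_indicator[OF cb(1)] m1])
  have mf2: "?f2 \<in> borel_measurable lborel" by (rule borel_measurable_times_ennreal[OF borel_measurable_indicator[OF cb(1)] m2])
  have mf3: "?f3 \<in> borel_measurable lborel" 
  proof (rule borel_measurable_times_ennreal)
    show "(\<lambda>z. ?E) \<in> borel_measurable lborel" by (rule borel_measurable_const)
    show "(indicator (ball (0::'a) R) :: 'a \<Rightarrow> ennreal) \<in> borel_measurable lborel" by (rule borel_measurable_indicator[OF cb(2)])
  qed
  have mf12: "(\<lambda>x. ?f1 x + ?f2 x) \<in> borel_measurable lborel" by (rule borel_measurable_add[OF mf1 mf2])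
  have mf123: "(\<lambda>x. ?f1 x + ?f2 x + ?f3 x) \<in> borel_measurable lborel" by (rule borel_measurable_add[OF mf12 mf3])
  have "(\<integral>\<^sup>+ z. indicator (ball 0 R) z * ?I z \<partial>lborel) \<le> (\<integral>\<^sup>+ z. ennreal (2 powr q) * (?f1 z + ?f2 z + ?f3 z) \<partial>lborel)"
    by (rule nn_integral_mono) (rule pw)
  also have "\<dots> = ennreal (2 powr q) * (\<integral>\<^sup>+ z. (?f1 z + ?f2 z + ?f3 z) \<partial>lborel)"
    by (rule nn_integral_cmult[OF mf123])
  also have "(\<integral>\<^sup>+ z. (?f1 z + ?f2 z + ?f3 z) \<partial>lborel) = (\<integral>\<^sup>+ z. (?f1 z + ?f2 z) \<partial>lborel) + (\<integral>\<^sup>+ z. ?f3 z \<partial>lborel)"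
    by (rule nn_integral_add[OF mf12 mf3])
  also have "(\<integral>\<^sup>+ z. (?f1 z + ?f2 z) \<partial>lborel) = (\<integral>\<^sup>+ z. ?f1 z \<partial>lborel) + (\<integral>\<^sup>+ z. ?f2 z \<partial>lborel)"
    by (rule nn_integral_add[OF mf1 mf2])
  also have "(\<integral>\<^sup>+ z. ?f3 z \<partial>lborel) = ?E * emeasure lborel (ball (0::'a) R)"
    by (rule nn_integral_cmult_indicator[OF cb(2)])
  finally show ?thesis .
qed

lemma Hq_bound:
  fixes K :: "'a::euclidean_space \<Rightarrow> 'a \<Rightarrow> real"
  assumes "R > 0"
  shows "ennreal ((2 ^ m * R) powr (real DIM('a) * (q - 1)) / measure lborel (ball (0::'a) R)) *
          (\<integral>\<^sup>+ v. indicator (cball (0::'a) R) v *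
             (\<integral>\<^sup>+ x. indicator {x. 2 ^ m * R \<le> norm (x - y) \<and> norm (x - y) \<le> 2 ^ (m + 1) * R} x *
                     ennreal (\<bar>K x (y + v) - K x y\<bar> powr q) \<partial>lborel) \<partial>lborel) \<le> Hq_pow K q m"
  unfolding Hq_pow_def
  by (rule SUP_upper2[where i="(y, R)"]) (use assms in auto)

lemma alg_B:
  fixes J d q s C1 L V1 \<rho> R :: real and n :: nat
  assumes s: "s > 0" and rho: "\<rho> = 2 powr J * s" and R: "R = 2 powr (- (real n - J) - 1) * s"
    and C1: "0 \<le> C1" and L: "0 \<le> L"
  shows "2 powr q * ((C1 * (\<rho> / 4) powr (- d) * L * R / \<rho>) powr q * V1 * (4 * \<rho>) powr d)
       = (2 powr q * (C1 * L * (s / 4) powr (- d)) powr q * 2 powr (- q) * V1 * (4 * s) powr d)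
           * 2 powr (- (J * d * (q - 1))) * 2 powr (- q * real n)"
proof -
  have e1: "(\<rho> / 4) powr (- d) = 2 powr (- (J * d)) * (s / 4) powr (- d)"
  proof -
    have "\<rho> / 4 = 2 powr J * (s / 4)" unfolding rho by simp
    then have "(\<rho> / 4) powr (- d) = (2 powr J) powr (- d) * (s / 4) powr (- d)"
      using s by (simp only:) (rule powr_mult)
    also have "(2 powr J) powr (- d) = 2 powr (- (J * d))" by (simp add: powr_powr)
    finally show ?thesis .
  qed
  have e2: "R / \<rho> = 2 powr (- real n - 1)"
  proof -
    have "R / \<rho> = 2 powr (- (real n - J) - 1) / 2 powr J" unfolding R rho using s by simp
    also have "\<dots> = 2 powr (- (real n - J) - 1 - J)" by (simp only: powr_diff)
    also have "- (real n - J) - 1 - J = - real n - 1" by simp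
    finally show ?thesis by simp
  qed
  have e3: "(4 * \<rho>) powr d = (4 * s) powr d * 2 powr (J * d)"
  proof -
    have "4 * \<rho> = (4 * s) * 2 powr J" unfolding rho by simp
    then have "(4 * \<rho>) powr d = (4 * s) powr d * (2 powr J) powr d" using s by (simp only:) (rule powr_mult)
    also have "(2 powr J) powr d = 2 powr (J * d)" by (simp add: powr_powr)
    finally show ?thesis .
  qed
  define X where "X = C1 * L * (s / 4) powr (- d)"
  have X0: "0 \<le> X" unfolding X_def using C1 L by simp
  have "C1 * (\<rho> / 4) powr (- d) * L * R / \<rho> = C1 * (\<rho> / 4) powr (- d) * L * (R / \<rho>)" by simp
  also have "\<dots> = X * (2 powr (- (J * d)) * 2 powr (- real n - 1))"
    unfolding X_def e1 e2 by (simp add: ac_simps)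
  also have "\<dots> = X * 2 powr (- (J * d) + (- real n - 1))" by (simp only: powr_add)
  finally have b: "C1 * (\<rho> / 4) powr (- d) * L * R / \<rho> = X * 2 powr (- (J * d) + (- real n - 1))" .
  have bq: "(C1 * (\<rho> / 4) powr (- d) * L * R / \<rho>) powr q = X powr q * 2 powr ((- (J * d) + (- real n - 1)) * q)"
    unfolding b using X0 by (simp add: powr_mult powr_powr)
  have ex: "((- (J * d) + (- real n - 1)) * q) + J * d = - q + (- (J * d * (q - 1))) + (- q * real n)"
    by (simp add: algebra_simps)
  have "2 powr ((- (J * d) + (- real n - 1)) * q) * 2 powr (J * d) = 2 powr (- q) * 2 powr (- (J * d * (q - 1))) * 2 powr (- q * real n)"
    by (simp only: powr_add[symmetric] ex)
  then show ?thesis unfolding bq e3 X_def[symmetric]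
    by (simp add: ac_simps)
qed

lemma alg_A:
  fixes J d q s \<rho> x :: real
  assumes s: "s > 0" and rho: "\<rho> = 2 powr J * s" and x: "\<rho> / 2 \<le> x" and d: "0 \<le> d" and q: "1 \<le> q"
  shows "2 powr q / x powr (d * (q - 1)) \<le> (2 powr q * (s / 2) powr (- (d * (q - 1)))) * 2 powr (- (J * d * (q - 1)))"
proof -
  let ?e = "d * (q - 1)"
  have e0: "0 \<le> ?e" using d q by simp
  have rp: "\<rho> / 2 > 0" using rho s by simp
  have "(\<rho> / 2) powr ?e \<le> x powr ?e" using x rp e0 by (intro powr_mono2) auto
  moreover have p: "(\<rho> / 2) powr ?e > 0" using rp by simp
  moreover have "x powr ?e > 0" using x rp by simp
  ultimately have "1 / x powr ?e \<le> 1 / (\<rho> / 2) powr ?e" by (intro divide_left_mono) auto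
  also have "\<dots> = (\<rho> / 2) powr (- ?e)" by (simp add: powr_minus_divide)
  also have "\<rho> / 2 = 2 powr J * (s / 2)" unfolding rho by simp
  also have "(2 powr J * (s / 2)) powr (- ?e) = (2 powr J) powr (- ?e) * (s / 2) powr (- ?e)" by (rule powr_mult)
  also have "(2 powr J) powr (- ?e) = 2 powr (- (J * d * (q - 1)))" by (simp add: powr_powr mult.assoc)
  finally have "1 / x powr ?e \<le> 2 powr (- (J * d * (q - 1))) * (s / 2) powr (- ?e)" .
  then have "2 powr q * (1 / x powr ?e) \<le> 2 powr q * (2 powr (- (J * d * (q - 1))) * (s / 2) powr (- ?e))"
    by (intro mult_left_mono) auto
  then show ?thesis by (simp add: ac_simps)
qed

lemma em2: "0 \<le> a \<Longrightarrow> 0 \<le> b \<Longrightarrow> ennreal a * ennreal b = ennreal (a * b)"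
  by (simp add: ennreal_mult)

lemma Q_from_H:
  fixes Q H :: ennreal
  assumes a: "a > 0" and B: "Bm > 0" and h: "ennreal (a / Bm) * Q \<le> H"
  shows "Q \<le> ennreal (Bm / a) * H"
proof -
  have "ennreal (Bm / a) * ennreal (a / Bm) = ennreal ((Bm / a) * (a / Bm))"
    using a B by (intro em2) auto
  also have "(Bm / a) * (a / Bm) = 1" using a B by simp
  finally have one: "ennreal (Bm / a) * ennreal (a / Bm) = 1" by simp
  have "Q = ennreal (Bm / a) * (ennreal (a / Bm) * Q)"
    by (simp only: mult.assoc[symmetric] one mult_1)
  also have "\<dots> \<le> ennreal (Bm / a) * H" using h by (rule mult_left_mono) simp
  finally show ?thesis .
qed

lemma final_ennreal:
  fixes I Q1 Q2 H1 H2 :: ennreal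
  assumes B: "Bm > 0" and a1: "a1 > 0" and a2: "a2 > 0" and e: "0 \<le> e" and c: "0 \<le> c" and E0: "0 \<le> E0"
    and p: "0 \<le> p"
    and I: "I \<le> ennreal p * (Q1 + Q2 + ennreal (e * Bm))"
    and Q1: "Q1 \<le> ennreal (Bm / a1) * H1" and Q2: "Q2 \<le> ennreal (Bm / a2) * H2"
    and c1: "p / a1 \<le> c" and c2: "p / a2 \<le> c" and c3: "p * e \<le> c * E0"
  shows "ennreal (1 / Bm) * I \<le> ennreal c * (H1 + H2 + ennreal E0)"
proof -
  have k: "ennreal (1 / Bm) * (ennreal p * (ennreal (Bm / a) * H)) = ennreal (p / a) * H" if a: "a > 0" for a H
  proof -
    have "ennreal (1 / Bm) * (ennreal p * (ennreal (Bm / a) * H)) = (ennreal (1 / Bm) * ennreal p * ennreal (Bm / a)) * H"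
      by (simp only: mult.assoc)
    also have "ennreal (1 / Bm) * ennreal p * ennreal (Bm / a) = ennreal (1 / Bm * p * (Bm / a))"
      using B p a by (simp add: em2)
    also have "1 / Bm * p * (Bm / a) = p / a" using B by simp
    finally show ?thesis .
  qed
  have k3: "ennreal (1 / Bm) * (ennreal p * ennreal (e * Bm)) = ennreal (p * e)"
  proof -
    have "ennreal (1 / Bm) * (ennreal p * ennreal (e * Bm)) = ennreal (1 / Bm * (p * (e * Bm)))"
      using B p e by (simp add: em2)
    also have "1 / Bm * (p * (e * Bm)) = p * e" using B by simp
    finally show ?thesis .
  qed
  have "ennreal (1 / Bm) * I \<le> ennreal (1 / Bm) * (ennreal p * (ennreal (Bm / a1) * H1 + ennreal (Bm / a2) * H2 + ennreal (e * Bm)))"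
  proof -
    have "I \<le> ennreal p * (ennreal (Bm / a1) * H1 + ennreal (Bm / a2) * H2 + ennreal (e * Bm))"
      using I Q1 Q2 by (meson add_mono order_refl mult_left_mono zero_le order_trans)
    then show ?thesis by (rule mult_left_mono) simp
  qed
  also have "\<dots> = ennreal (1 / Bm) * (ennreal p * (ennreal (Bm / a1) * H1)) + ennreal (1 / Bm) * (ennreal p * (ennreal (Bm / a2) * H2))
      + ennreal (1 / Bm) * (ennreal p * ennreal (e * Bm))"
    by (simp only: distrib_left)
  also have "\<dots> = ennreal (p / a1) * H1 + ennreal (p / a2) * H2 + ennreal (p * e)"
    by (simp only: k[OF a1] k[OF a2] k3)
  also have "\<dots> \<le> ennreal c * H1 + ennreal c * H2 + ennreal c * ennreal E0"
  proof -
    have "ennreal (p * e) \<le> ennreal (c * E0)" using c3 by (rule ennreal_leI)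
    also have "ennreal (c * E0) = ennreal c * ennreal E0" using c E0 by (simp add: em2)
    finally have "ennreal (p * e) \<le> ennreal c * ennreal E0" .
    moreover have "ennreal (p / a1) * H1 \<le> ennreal c * H1" using c1 by (intro mult_right_mono ennreal_leI) auto
    moreover have "ennreal (p / a2) * H2 \<le> ennreal c * H2" using c2 by (intro mult_right_mono ennreal_leI) auto
    ultimately show ?thesis by (intro add_mono)
  qed
  also have "\<dots> = ennreal c * (H1 + H2 + ennreal E0)" by (simp only: distrib_left)
  finally show ?thesis .
qed

theorem lemma4p3:
  fixes K :: "'a::euclidean_space \<Rightarrow> 'a \<Rightarrow> real"
    and \<Phi> :: "'a \<Rightarrow> real"
    and C\<^sub>1 q :: real
  assumes Phi: "admissible_Phi \<Phi>"
    and K_meas: "(\<lambda>(x, y). K x y) \<in> borel_measurable borel"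
    and K_size: "\<forall>x y. x \<noteq> y \<longrightarrow> \<bar>K x y\<bar> \<le> C\<^sub>1 * norm (x - y) powr (- real DIM('a))"
    and H2_sum: "(\<Sum>m. Hq K 2 (Suc m)) < top"
    and q: "1 \<le> q"
  shows "\<exists>C::real. 0 \<le> C \<and> (\<forall>(j::int) (n::nat). 1 \<le> n \<longrightarrow>
     (SUP y \<in> (UNIV :: 'a set).
        ennreal (1 / measure lborel (ball (0::'a) (2 powr (- real_of_int (int n - j) - 1) * sqrt (real DIM('a))))) *
        (\<integral>\<^sup>+ z. indicator (ball (0::'a) (2 powr (- real_of_int (int n - j) - 1) * sqrt (real DIM('a)))) z *
           (\<integral>\<^sup>+ x. ennreal (\<bar>K_j K \<Phi> j x (y + z) - K_j K \<Phi> j x y\<bar> powr q) \<partial>lborel) \<partial>lborel))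
     \<le> ennreal (C * 2 powr (- (real_of_int j * real DIM('a) * (q - 1)))) *
        (Hq_pow K q n + Hq_pow K q (n + 1) + ennreal (2 powr (- q * real n))))"
proof -
  obtain L where L0: "0 \<le> L" and Lip: "\<forall>u w. \<bar>\<Phi> (u + w) - \<Phi> u\<bar> \<le> L * norm w"
    using Phi_lip[OF Phi] by blast
  have C0: "0 \<le> C\<^sub>1"
  proof -
    obtain b :: 'a where b: "b \<in> Basis" using nonempty_Basis by blast
    then have "b \<noteq> 0" by auto
    then have "\<bar>K b 0\<bar> \<le> C\<^sub>1 * norm (b - 0) powr (- real DIM('a))" using K_size by blast
    then have "\<bar>K b 0\<bar> \<le> C\<^sub>1" using b by simp
    then show ?thesis by linarith
  qed
  define d where "d = real DIM('a)"
  define s where "s = sqrt (real DIM('a))"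
  define V1 where "V1 = unit_ball_vol (real DIM('a))"
  define A0 where "A0 = 2 powr q * (s / 2) powr (- (d * (q - 1)))"
  define B0 where "B0 = 2 powr q * (C\<^sub>1 * L * (s / 4) powr (- d)) powr q * 2 powr (- q) * V1 * (4 * s) powr d"
  have s0: "s > 0" unfolding s_def by simp
  have d0: "d \<ge> 0" unfolding d_def by simp
  have V0: "V1 \<ge> 0" unfolding V1_def by simp
  have A00: "A0 \<ge> 0" unfolding A0_def by simp
  have B00: "B0 \<ge> 0" unfolding B0_def using V0 by simp
  show ?thesis
  proof (intro exI[of _ "A0 + B0"] conjI allI impI)
    show "0 \<le> A0 + B0" using A00 B00 by simp
  next
    fix j :: int and n :: nat
    assume n1: "1 \<le> n"
    define J where "J = real_of_int j"
    define \<rho> where "\<rho> = 2 powr J * s"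
    define R where "R = 2 powr (- real_of_int (int n - j) - 1) * sqrt (real DIM('a))"
    define T where "T = 2 powr (- (real_of_int j * real DIM('a) * (q - 1)))"
    define E0 where "E0 = 2 powr (- q * real n)"
    have R': "R = 2 powr (- (real n - J) - 1) * s" unfolding R_def J_def s_def by simp
    have rho0: "\<rho> > 0" unfolding \<rho>_def using s0 by simp
    have R0: "R > 0" unfolding R' using s0 by simp
    have a1: "2 ^ n * R = \<rho> / 2"
    proof -
      have "(2::real) ^ n = 2 powr (real n)" by (simp add: powr_realpow)
      then have "(2::real) ^ n * 2 powr (- (real n - J) - 1) = 2 powr (real n + (- (real n - J) - 1))"
        by (simp only: powr_add)
      also have "real n + (- (real n - J) - 1) = J - 1" by simp
      also have "(2::real) powr (J - 1) = 2 powr J / 2" by (simp add: powr_diff)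
      finally show ?thesis unfolding R' \<rho>_def by (simp add: mult.assoc[symmetric])
    qed
    have b1: "2 ^ (n + 1) * R = \<rho>" using a1 by (simp add: ac_simps)
    have b2: "2 ^ (n + 1 + 1) * R = 2 * \<rho>" using a1 by (simp add: ac_simps)
    have r: "R \<le> \<rho> / 4"
    proof -
      have "(2::real) \<le> 2 ^ n" using n1 by (metis power_one_right power_increasing one_le_numeral)
      then have "2 * R \<le> 2 ^ n * R" using R0 by (intro mult_right_mono) auto
      then show ?thesis using a1 by simp
    qed
    show "(SUP y \<in> (UNIV :: 'a set).
        ennreal (1 / measure lborel (ball (0::'a) (2 powr (- real_of_int (int n - j) - 1) * sqrt (real DIM('a))))) *
        (\<integral>\<^sup>+ z. indicator (ball (0::'a) (2 powr (- real_of_int (int n - j) - 1) * sqrt (real DIM('a)))) z *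
           (\<integral>\<^sup>+ x. ennreal (\<bar>K_j K \<Phi> j x (y + z) - K_j K \<Phi> j x y\<bar> powr q) \<partial>lborel) \<partial>lborel))
     \<le> ennreal ((A0 + B0) * 2 powr (- (real_of_int j * real DIM('a) * (q - 1)))) *
        (Hq_pow K q n + Hq_pow K q (n + 1) + ennreal (2 powr (- q * real n)))"
      unfolding R_def[symmetric] T_def[symmetric] E0_def[symmetric]
    proof (rule SUP_least)
      fix y :: 'a
      show "ennreal (1 / measure lborel (ball (0::'a) R)) *
        (\<integral>\<^sup>+ z. indicator (ball (0::'a) R) z *
           (\<integral>\<^sup>+ x. ennreal (\<bar>K_j K \<Phi> j x (y + z) - K_j K \<Phi> j x y\<bar> powr q) \<partial>lborel) \<partial>lborel)
        \<le> ennreal ((A0 + B0) * T) * (Hq_pow K q n + Hq_pow K q (n + 1) + ennreal E0)"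
      proof (rule final_ennreal)
        define Bm where "Bm = measure lborel (ball (0::'a) R)"
        show Bp: "Bm > 0" unfolding Bm_def using R0 by (rule content_ball_pos)
        have fin: "emeasure lborel (ball (0::'a) R) \<noteq> top"
          using emeasure_lborel_ball_finite[of "0::'a" R] by (simp add: less_top)
        have emB: "emeasure lborel (ball (0::'a) R) = ennreal Bm"
          unfolding Bm_def by (rule emeasure_eq_ennreal_measure[OF fin])
        have emC: "emeasure lborel (cball y (4 * \<rho>)) = ennreal (V1 * (4 * \<rho>) powr d)"
        proof -
          have "emeasure lborel (cball y (4 * \<rho>)) = ennreal (unit_ball_vol (real DIM('a)) * (4 * \<rho>) ^ DIM('a))"
            using rho0 by (intro emeasure_cball) simp
          also have "(4 * \<rho>) ^ DIM('a) = (4 * \<rho>) powr d" unfolding d_def using rho0 by (simp add: powr_realpow)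
          finally show ?thesis unfolding V1_def .
        qed
        have rho': "\<rho> = 2 powr real_of_int j * sqrt (real DIM('a))" unfolding \<rho>_def J_def s_def ..
        define \<beta>q where "\<beta>q = (C\<^sub>1 * (\<rho> / 4) powr (- real DIM('a)) * L * R / \<rho>) powr q"
        define e where "e = \<beta>q * V1 * (4 * \<rho>) powr d"
        have bq0: "0 \<le> \<beta>q" unfolding \<beta>q_def by simp
        show e0: "0 \<le> e" unfolding e_def using bq0 V0 by simp
        note ob = outer_bound[OF Phi K_meas Lip L0 K_size C0 rho' r q a1 b1 b2, of y]
        show "(\<integral>\<^sup>+ z. indicator (ball (0::'a) R) z *
           (\<integral>\<^sup>+ x. ennreal (\<bar>K_j K \<Phi> j x (y + z) - K_j K \<Phi> j x y\<bar> powr q) \<partial>lborel) \<partial>lborel)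
          \<le> ennreal (2 powr q) * (
       (\<integral>\<^sup>+ v. indicator (cball (0::'a) R) v *
             (\<integral>\<^sup>+ x. indicator {x. 2 ^ n * R \<le> norm (x - y) \<and> norm (x - y) \<le> 2 ^ (n + 1) * R} x *
                     ennreal (\<bar>K x (y + v) - K x y\<bar> powr q) \<partial>lborel) \<partial>lborel)
     + (\<integral>\<^sup>+ v. indicator (cball (0::'a) R) v *
             (\<integral>\<^sup>+ x. indicator {x. 2 ^ (n + 1) * R \<le> norm (x - y) \<and> norm (x - y) \<le> 2 ^ (n + 1 + 1) * R} x *
                     ennreal (\<bar>K x (y + v) - K x y\<bar> powr q) \<partial>lborel) \<partial>lborel)
     + ennreal (e * Bm))"
        proof -
          have "ennreal \<beta>q * emeasure lborel (cball y (4 * \<rho>)) * emeasure lborel (ball (0::'a) R) = ennreal (e * Bm)"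
            unfolding emC emB e_def using bq0 V0 Bp by (simp add: em2 mult.assoc)
          then show ?thesis using ob unfolding \<beta>q_def by simp
        qed
        show "(\<integral>\<^sup>+ v. indicator (cball (0::'a) R) v *
             (\<integral>\<^sup>+ x. indicator {x. 2 ^ n * R \<le> norm (x - y) \<and> norm (x - y) \<le> 2 ^ (n + 1) * R} x *
                     ennreal (\<bar>K x (y + v) - K x y\<bar> powr q) \<partial>lborel) \<partial>lborel)
          \<le> ennreal (Bm / (2 ^ n * R) powr (real DIM('a) * (q - 1))) * Hq_pow K q n"
          by (rule Q_from_H[OF _ Bp Hq_bound[OF R0, where K=K and m=n and q=q and y=y, unfolded Bm_def[symmetric]]]) (use R0 in simp)
        show "(\<integral>\<^sup>+ v. indicator (cball (0::'a) R) v *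
             (\<integral>\<^sup>+ x. indicator {x. 2 ^ (n + 1) * R \<le> norm (x - y) \<and> norm (x - y) \<le> 2 ^ (n + 1 + 1) * R} x *
                     ennreal (\<bar>K x (y + v) - K x y\<bar> powr q) \<partial>lborel) \<partial>lborel)
          \<le> ennreal (Bm / (2 ^ (n + 1) * R) powr (real DIM('a) * (q - 1))) * Hq_pow K q (n + 1)"
          by (rule Q_from_H[OF _ Bp Hq_bound[OF R0, where K=K and m="n + 1" and q=q and y=y, unfolded Bm_def[symmetric]]]) (use R0 in simp)
        show "2 powr q / (2 ^ n * R) powr (real DIM('a) * (q - 1)) \<le> (A0 + B0) * T"
        proof -
          have "2 powr q / (2 ^ n * R) powr (d * (q - 1)) \<le> A0 * T"
            unfolding A0_def T_def a1 using alg_A[OF s0 \<rho>_def _ d0 q, where x="\<rho> / 2"] J_def d_def by simp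
          then show ?thesis using B00 T_def d_def by (simp add: distrib_right add_increasing2)
        qed
        show "2 powr q / (2 ^ (n + 1) * R) powr (real DIM('a) * (q - 1)) \<le> (A0 + B0) * T"
        proof -
          have "2 powr q / (2 ^ (n + 1) * R) powr (d * (q - 1)) \<le> A0 * T"
            unfolding A0_def T_def b1 using alg_A[OF s0 \<rho>_def _ d0 q, where x="\<rho>"] rho0 J_def d_def by simp
          then show ?thesis using B00 T_def d_def by (simp add: distrib_right add_increasing2)
        qed
        show "2 powr q * e \<le> (A0 + B0) * T * E0"
        proof -
          have "2 powr q * e = B0 * T * E0"
            unfolding e_def \<beta>q_def B0_def T_def E0_def
            using alg_B[OF s0 \<rho>_def R' C0 L0, of q d V1] J_def d_def by (simp add: ac_simps)
          moreover have "0 \<le> A0 * T * E0" using A00 T_def E0_def by simp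
          ultimately show ?thesis by (simp add: distrib_right)
        qed
      qed (use R0 A00 B00 T_def E0_def in auto)
    qed
  qed
qed


end
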